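(* Let $\mathbb{F}$ be a free group on a finite basis $X$, $\pi:\mathbb{F}\twoheadrightarrow\Gamma$ an epimorphism, and suppose $\Gamma$ is stable with respect to $\pi$ and $\ker\pi$ is nontrivial. Then there exist $C_1,C_2>0$ such that for all $x\ge C_1$: (i) if $\delta>0$ is such that there exists a finite $E\subseteq\ker\pi$ for which every $(\delta,E)$-almost-solution is $x^{-1}$-close to a solution for $\ker\pi$, then $\delta\le C_2x^{-1}$; (ii) $F_\Gamma^\pi(x)\ge x/4$.
   Context: For a finite set $\Omega$, $d_\Omega(\sigma,\tau)=|\{\omega:\sigma(\omega)\ne\tau(\omega)\}|/|\Omega|$. For $E\subseteq\mathbb{F}$, a homomorphism $\phi:\mathbb{F}\to\mathrm{Sym}(\Omega)$ ($\Omega$ finite) is a solution for $E$ if $E\subseteq\ker\phi$, and a $(\delta,E)$-almost-solution if $d_\Omega(\phi(r),\mathrm{id}_\Omega)<\delta$ for all $r\in E$. Homomorphisms $\rho,\phi:\mathbb{F}\to\mathrm{Sym}(\Omega)$ are $\epsilon$-close if $d_\Omega(\rho(x),\phi(x))<\epsilon$ for all $x\in X$. $\Gamma$ is stable w.r.t. $\pi$ if for every $\epsilon>0$ there exist $\delta\in(0,1]$ and finite $E\subseteq\ker\pi$ (a valid pair for $\epsilon$) such that every $(\delta,E)$-almost-solution is $\epsilon$-close to a solution for $\ker\pi$. With $\|E\|=\sum_{r\in E}|r|$ (word length in $X$), $F_\Gamma^\pi(x)=\inf\{\|E\|/\delta\}$ over valid pairs for $\epsilon=1/x$. *)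

theory Defs
  imports Complex_Main "HOL-Algebra.Algebra"
begin

text \<open>A letter is a pair (x, b): b = False means the generator x, b = True means its inverse.\<close>

fun red_cons :: "'a \<times> bool \<Rightarrow> ('a \<times> bool) list \<Rightarrow> ('a \<times> bool) list" where
  "red_cons a [] = [a]"
| "red_cons a (b # bs) = (if fst a = fst b \<and> snd a \<noteq> snd b then bs else a # b # bs)"

definition reduce :: "('a \<times> bool) list \<Rightarrow> ('a \<times> bool) list" where
  "reduce ws = foldr red_cons ws []"

fun reduced :: "('a \<times> bool) list \<Rightarrow> bool" where
  "reduced [] = True"
| "reduced [a] = True"
| "reduced (a # b # bs) = (\<not> (fst a = fst b \<and> snd a \<noteq> snd b) \<and> reduced (b # bs))"

definition free_group :: "'a set \<Rightarrow> ('a \<times> bool) list monoid" where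
  "free_group B = \<lparr>carrier = {w. fst ` set w \<subseteq> B \<and> reduced w},
                   monoid.mult = (\<lambda>u v. reduce (u @ v)),
                   one = []\<rparr>"

definition gen :: "'a \<Rightarrow> ('a \<times> bool) list" where
  "gen x = [(x, False)]"

definition hdist :: "nat set \<Rightarrow> (nat \<Rightarrow> nat) \<Rightarrow> (nat \<Rightarrow> nat) \<Rightarrow> real" where
  "hdist \<Omega> \<sigma> \<tau> = real (card {\<omega> \<in> \<Omega>. \<sigma> \<omega> \<noteq> \<tau> \<omega>}) / real (card \<Omega>)"

text \<open>Homomorphisms F \<rightarrow> Sym(\<Omega>), \<Omega> a finite set (taken inside nat, w.l.o.g.).\<close>

definition sym_hom :: "'a set \<Rightarrow> nat set \<Rightarrow> (('a \<times> bool) list \<Rightarrow> (nat \<Rightarrow> nat)) \<Rightarrow> bool" where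
  "sym_hom B \<Omega> \<phi> \<longleftrightarrow> finite \<Omega> \<and> \<phi> \<in> hom (free_group B) (BijGroup \<Omega>)"

definition is_solution :: "'a set \<Rightarrow> nat set \<Rightarrow> ('a \<times> bool) list set \<Rightarrow> (('a \<times> bool) list \<Rightarrow> (nat \<Rightarrow> nat)) \<Rightarrow> bool" where
  "is_solution B \<Omega> E \<phi> \<longleftrightarrow> E \<subseteq> kernel (free_group B) (BijGroup \<Omega>) \<phi>"

definition almost_solution :: "'a set \<Rightarrow> nat set \<Rightarrow> real \<Rightarrow> ('a \<times> bool) list set \<Rightarrow> (('a \<times> bool) list \<Rightarrow> (nat \<Rightarrow> nat)) \<Rightarrow> bool" where
  "almost_solution B \<Omega> \<delta> E \<phi> \<longleftrightarrow> (\<forall>r\<in>E. hdist \<Omega> (\<phi> r) (\<one>\<^bsub>BijGroup \<Omega>\<^esub>) < \<delta>)"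

definition eps_close :: "'a set \<Rightarrow> nat set \<Rightarrow> real \<Rightarrow> (('a \<times> bool) list \<Rightarrow> (nat \<Rightarrow> nat)) \<Rightarrow> (('a \<times> bool) list \<Rightarrow> (nat \<Rightarrow> nat)) \<Rightarrow> bool" where
  "eps_close B \<Omega> \<epsilon> \<rho> \<phi> \<longleftrightarrow> (\<forall>x\<in>B. hdist \<Omega> (\<rho> (gen x)) (\<phi> (gen x)) < \<epsilon>)"

definition stab_property :: "'a set \<Rightarrow> ('a \<times> bool) list set \<Rightarrow> real \<Rightarrow> real \<Rightarrow> ('a \<times> bool) list set \<Rightarrow> bool" where
  "stab_property B K \<epsilon> \<delta> E \<longleftrightarrow>
     (\<forall>\<Omega> \<phi>. sym_hom B \<Omega> \<phi> \<and> almost_solution B \<Omega> \<delta> E \<phi> \<longrightarrow>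
        (\<exists>\<psi>. sym_hom B \<Omega> \<psi> \<and> is_solution B \<Omega> K \<psi> \<and> eps_close B \<Omega> \<epsilon> \<psi> \<phi>))"

definition valid_pair :: "'a set \<Rightarrow> ('a \<times> bool) list set \<Rightarrow> real \<Rightarrow> real \<Rightarrow> ('a \<times> bool) list set \<Rightarrow> bool" where
  "valid_pair B K \<epsilon> \<delta> E \<longleftrightarrow> 0 < \<delta> \<and> \<delta> \<le> 1 \<and> finite E \<and> E \<subseteq> K \<and> stab_property B K \<epsilon> \<delta> E"

definition stable :: "'a set \<Rightarrow> ('a \<times> bool) list set \<Rightarrow> bool" where
  "stable B K \<longleftrightarrow> (\<forall>\<epsilon>>0. \<exists>\<delta> E. valid_pair B K \<epsilon> \<delta> E)"

definition word_norm :: "('a \<times> bool) list set \<Rightarrow> real" where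
  "word_norm E = (\<Sum>r\<in>E. real (length r))"

definition stability_function :: "'a set \<Rightarrow> ('a \<times> bool) list set \<Rightarrow> real \<Rightarrow> real" where
  "stability_function B K x = Inf {word_norm E / \<delta> | \<delta> E. valid_pair B K (1 / x) \<delta> E}"

end

theory Submission
  imports Defs "HOL-Combinatorics.Permutations"
begin


definition ltr :: "('a \<Rightarrow> 'c \<Rightarrow> 'c) \<Rightarrow> ('a \<times> bool) \<Rightarrow> 'c \<Rightarrow> 'c" where
  "ltr p l = (if snd l then inv_into UNIV (p (fst l)) else p (fst l))"

fun evw :: "('a \<Rightarrow> 'c \<Rightarrow> 'c) \<Rightarrow> ('a \<times> bool) list \<Rightarrow> 'c \<Rightarrow> 'c" where
  "evw p [] = id"
| "evw p (l # ls) = ltr p l \<circ> evw p ls"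

lemma evw_append: "evw p (u @ v) = evw p u \<circ> evw p v"
  by (induction u) (auto simp: o_assoc)

lemma evw_red_cons:
  assumes "\<And>g. bij (p g)"
  shows "evw p (red_cons a ws) = evw p (a # ws)"
proof (cases ws)
  case Nil then show ?thesis by simp
next
  case (Cons b bs)
  show ?thesis
  proof (cases "fst a = fst b \<and> snd a \<noteq> snd b")
    case True
    have "ltr p a \<circ> ltr p b = id"
    proof (cases "snd a")
      case True
      then show ?thesis using \<open>fst a = fst b \<and> snd a \<noteq> snd b\<close> assms[of "fst a"]
        by (simp add: ltr_def bij_is_inj inv_o_cancel)
    next
      case False
      then show ?thesis using \<open>fst a = fst b \<and> snd a \<noteq> snd b\<close> assms[of "fst a"]
        by (simp add: ltr_def) (metis bij_is_surj surj_iff)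
    qed
    then have "ltr p a \<circ> (ltr p b \<circ> evw p bs) = evw p bs"
      by (metis comp_assoc id_comp)
    then show ?thesis using Cons True by simp
  next
    case False then show ?thesis using Cons by auto
  qed
qed

lemma evw_reduce:
  assumes "\<And>g. bij (p g)"
  shows "evw p (reduce ws) = evw p ws"
proof (induction ws)
  case Nil then show ?case by (simp add: reduce_def)
next
  case (Cons a ws)
  have "reduce (a # ws) = red_cons a (reduce ws)" by (simp add: reduce_def)
  moreover have "evw p (red_cons a (reduce ws)) = evw p (a # reduce ws)"
    by (rule evw_red_cons[OF assms])
  ultimately show ?case using Cons by simp
qed

lemma ltr_permutes: "(\<And>g. p g permutes S) \<Longrightarrow> ltr p l permutes S"
  by (simp add: ltr_def permutes_inv)

lemma evw_permutes: "(\<And>g. p g permutes S) \<Longrightarrow> evw p r permutes S"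
  by (induction r) (auto intro: permutes_compose ltr_permutes permutes_id)

lemma reduced_Cons: "reduced (a # ws) \<Longrightarrow> reduced ws"
  by (cases ws) auto

lemma reduce_reduced: "reduced ws \<Longrightarrow> reduce ws = ws"
proof (induction ws)
  case Nil then show ?case by (simp add: reduce_def)
next
  case (Cons a ws)
  have "reduce (a # ws) = red_cons a (reduce ws)" by (simp add: reduce_def)
  also have "\<dots> = red_cons a ws" using Cons reduced_Cons by metis
  also have "\<dots> = a # ws" using Cons.prems by (cases ws) auto
  finally show ?case .
qed

lemma reduced_nth:
  "reduced w \<Longrightarrow> Suc i < length w \<Longrightarrow> \<not> (fst (w!i) = fst (w!Suc i) \<and> snd (w!i) \<noteq> snd (w!Suc i))"
proof (induction w arbitrary: i rule: reduced.induct)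
  case (3 a b bs)
  then show ?case by (cases i) auto
qed auto



lemma extend_perm:
  assumes "finite S" "D \<subseteq> S" "inj_on f D" "f ` D \<subseteq> S"
  shows "\<exists>p. p permutes S \<and> (\<forall>x\<in>D. p x = f x)"
proof -
  have "card (S - D) = card (S - f ` D)"
    using assms by (simp add: card_Diff_subset card_image finite_subset)
  then obtain b where b: "bij_betw b (S - D) (S - f ` D)"
    using assms finite_same_card_bij by (metis finite_Diff)
  define p where "p x = (if x \<in> D then f x else if x \<in> S then b x else x)" for x
  have "bij_betw p S S"
  proof -
    have i1: "bij_betw p D (f ` D)"
      using assms(3) by (simp add: bij_betw_def inj_on_def p_def image_def) 
    have i2: "bij_betw p (S - D) (S - f ` D)"
      using b by (rule bij_betw_cong[THEN iffD1, rotated]) (simp add: p_def)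
    have "bij_betw p (D \<union> (S - D)) (f ` D \<union> (S - f ` D))"
      by (rule bij_betw_combine[OF i1 i2]) blast
    moreover have "D \<union> (S - D) = S" "f ` D \<union> (S - f ` D) = S" using assms by auto
    ultimately show ?thesis by simp
  qed
  moreover have "\<And>x. x \<notin> S \<Longrightarrow> p x = x" using assms by (auto simp: p_def)
  ultimately have "p permutes S" by (rule bij_imp_permutes)
  then show ?thesis by (auto simp: p_def)
qed



definition Dg :: "('a \<times> bool) list \<Rightarrow> 'a \<Rightarrow> nat set" where
  "Dg w g = {x. x \<le> length w \<and> ((1 \<le> x \<and> w!(x-1) = (g,False)) \<or> (x < length w \<and> w!x = (g,True)))}"

definition fg :: "('a \<times> bool) list \<Rightarrow> 'a \<Rightarrow> nat \<Rightarrow> nat" where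
  "fg w g x = (if 1 \<le> x \<and> x \<le> length w \<and> w!(x-1) = (g,False) then x-1 else x+1)"

definition pp :: "('a \<times> bool) list \<Rightarrow> 'a \<Rightarrow> nat \<Rightarrow> nat" where
  "pp w g = (SOME p. p permutes {0..length w} \<and> (\<forall>x\<in>Dg w g. p x = fg w g x))"

lemma red_nth_pair:
  assumes "reduced w" "Suc i < length w" "w!i = (g, b)" "w!Suc i = (g, \<not> b)"
  shows False
  using reduced_nth[OF assms(1,2)] assms(3,4) by auto

lemma fg_inj:
  assumes "reduced w"
  shows "inj_on (fg w g) (Dg w g)"
proof
  fix x y assume x: "x \<in> Dg w g" and y: "y \<in> Dg w g" and e: "fg w g x = fg w g y"
  show "x = y"
  proof (cases "1 \<le> x \<and> x \<le> length w \<and> w!(x-1) = (g,False)")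
    case cx: True
    show ?thesis
    proof (cases "1 \<le> y \<and> y \<le> length w \<and> w!(y-1) = (g,False)")
      case True then show ?thesis using cx e by (auto simp: fg_def)
    next
      case False
      then have "y < length w" "w!y = (g,True)" using y by (auto simp: Dg_def)
      moreover have "x = y + 2" using cx False e by (auto simp: fg_def)
      ultimately show ?thesis using red_nth_pair[OF assms, of y g True] cx by auto
    qed
  next
    case cx: False
    then have xx: "x < length w" "w!x = (g,True)" using x by (auto simp: Dg_def)
    show ?thesis
    proof (cases "1 \<le> y \<and> y \<le> length w \<and> w!(y-1) = (g,False)")
      case True 
      moreover have "y = x + 2" using cx True e by (auto simp: fg_def)
      ultimately show ?thesis using red_nth_pair[OF assms, of x g True] xx by auto
    next
      case False then show ?thesis using cx e by (auto simp: fg_def)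
    qed
  qed
qed

lemma fg_image: "fg w g ` Dg w g \<subseteq> {0..length w}"
  by (auto simp: fg_def Dg_def)

lemma pp_props:
  assumes "reduced w"
  shows "pp w g permutes {0..length w} \<and> (\<forall>x\<in>Dg w g. pp w g x = fg w g x)"
proof -
  have "\<exists>p. p permutes {0..length w} \<and> (\<forall>x\<in>Dg w g. p x = fg w g x)"
    by (rule extend_perm) (auto simp: fg_inj[OF assms] fg_image, auto simp: Dg_def)
  then show ?thesis unfolding pp_def by (rule someI_ex)
qed

lemma path_step:
  assumes "reduced w" "j < length w"
  shows "ltr (pp w) (w!j) (Suc j) = j"
proof (cases "w!j")
  case (Pair g b)
  show ?thesis
  proof (cases b)
    case False
    have "Suc j \<in> Dg w g" using assms Pair False by (auto simp: Dg_def)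
    then have "pp w g (Suc j) = fg w g (Suc j)" using pp_props[OF assms(1)] by blast
    also have "\<dots> = j" using assms Pair False by (auto simp: fg_def)
    finally show ?thesis using Pair False by (simp add: ltr_def)
  next
    case True
    have "j \<in> Dg w g" using assms Pair True by (auto simp: Dg_def)
    then have "pp w g j = fg w g j" using pp_props[OF assms(1)] by blast
    also have "\<dots> = Suc j"
    proof -
      have "\<not> (1 \<le> j \<and> w!(j-1) = (g,False))"
      proof
        assume h: "1 \<le> j \<and> w!(j-1) = (g,False)"
        then show False using red_nth_pair[OF assms(1), of "j-1" g False] Pair True assms(2) by auto
      qed
      then show ?thesis by (auto simp: fg_def)
    qed
    finally have "pp w g j = Suc j" .
    then have "inv_into UNIV (pp w g) (Suc j) = j"
      using pp_props[OF assms(1)] by (metis permutes_inv_eq)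
    then show ?thesis using Pair True by (simp add: ltr_def)
  qed
qed

lemma path:
  assumes "reduced w"
  shows "i \<le> length w \<Longrightarrow> evw (pp w) (drop (length w - i) w) (length w) = length w - i"
proof (induction i)
  case 0 then show ?case by simp
next
  case (Suc i)
  let ?j = "length w - Suc i"
  have j: "?j < length w" using Suc.prems by simp
  have "drop ?j w = w!?j # drop (Suc ?j) w" using j by (simp add: Cons_nth_drop_Suc)
  moreover have "Suc ?j = length w - i" using Suc.prems by simp
  ultimately have "evw (pp w) (drop ?j w) (length w) = ltr (pp w) (w!?j) (Suc ?j)"
    using Suc by simp
  then show ?case using path_step[OF assms j] by simp
qed

lemma path_nontriv:
  assumes "reduced w" "w \<noteq> []"
  shows "evw (pp w) w (length w) \<noteq> length w"
  using path[OF assms(1), of "length w"] assms(2) by simp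



lemma regular_rep:
  fixes q :: "'a \<Rightarrow> nat \<Rightarrow> nat" and T :: "nat set" and w :: "('a \<times> bool) list"
  assumes q: "\<And>g. q g permutes T" and fin: "finite T" and m: "evw q w m0 \<noteq> m0" and m0: "m0 \<in> T"
  shows "\<exists>N0 \<ge> 1. \<exists>P::'a \<Rightarrow> nat \<Rightarrow> nat. (\<forall>g. P g permutes {0..<N0}) \<and> (\<forall>i<N0. evw P w i \<noteq> i)"
proof -
  define S where "S = {\<sigma>::nat\<Rightarrow>nat. \<sigma> permutes T}"
  define L where "L g \<sigma> = q g \<circ> \<sigma>" for g and \<sigma> :: "nat \<Rightarrow> nat"
  have finS: "finite S" unfolding S_def using fin by (rule finite_permutations)
  have idS: "id \<in> S" unfolding S_def by (simp add: permutes_id)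
  have invL: "inv_into UNIV (L g) = (\<lambda>\<sigma>. inv_into UNIV (q g) \<circ> \<sigma>)" for g
  proof (rule inv_unique_comp)
    show "L g \<circ> (\<lambda>\<sigma>. inv_into UNIV (q g) \<circ> \<sigma>) = id"
      using permutes_inv_o(1)[OF q[of g]] by (auto simp: L_def fun_eq_iff o_assoc[symmetric])
    show "(\<lambda>\<sigma>. inv_into UNIV (q g) \<circ> \<sigma>) \<circ> L g = id"
      using permutes_inv_o(2)[OF q[of g]] by (auto simp: L_def fun_eq_iff o_assoc[symmetric])
  qed
  have ltrL: "ltr L l \<sigma> = ltr q l \<circ> \<sigma>" for l \<sigma>
    by (simp add: ltr_def invL L_def)
  have evL: "evw L r \<sigma> = evw q r \<circ> \<sigma>" for r \<sigma>
    by (induction r arbitrary: \<sigma>) (auto simp: ltrL)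
  have ltrS: "\<sigma> \<in> S \<Longrightarrow> ltr L l \<sigma> \<in> S" for l \<sigma>
    unfolding ltrL S_def by (auto intro: permutes_compose ltr_permutes q)
  have evS: "\<sigma> \<in> S \<Longrightarrow> evw L r \<sigma> \<in> S" for r \<sigma>
    by (induction r arbitrary: \<sigma>) (auto simp: ltrS)
  define N0 where "N0 = card S"
  obtain h where h: "bij_betw h S {0..<N0}" using ex_bij_betw_finite_nat[OF finS] N0_def by blast
  have "card S > 0" using idS finS card_gt_0_iff by blast
  then have N0: "N0 \<ge> 1" unfolding N0_def by simp
  define P where "P g i = (if i < N0 then h (L g (inv_into S h i)) else i)" for g i
  have Lbij: "bij_betw (L g) S S" for g
  proof -
    have "inj (L g)"
      by (rule inj_on_inverseI[where g="\<lambda>\<sigma>. inv_into UNIV (q g) \<circ> \<sigma>"])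
         (simp add: L_def o_assoc permutes_inv_o(2)[OF q[of g]])
    then have "inj_on (L g) S" by (rule inj_on_subset[OF _ subset_UNIV])
    moreover have "L g ` S = S"
    proof
      show "L g ` S \<subseteq> S" using ltrS[of _ "(g,False)"] by (auto simp: ltr_def)
      show "S \<subseteq> L g ` S"
      proof
        fix \<sigma> assume s: "\<sigma> \<in> S"
        have "inv_into UNIV (L g) \<sigma> \<in> S" using ltrS[OF s, of "(g,True)"] by (simp add: ltr_def)
        moreover have "L g (inv_into UNIV (L g) \<sigma>) = \<sigma>"
          by (simp add: invL L_def o_assoc permutes_inv_o(1)[OF q[of g]])
        ultimately show "\<sigma> \<in> L g ` S" by (metis image_eqI)
      qed
    qed
    ultimately show ?thesis by (simp add: bij_betw_def)
  qed
  have Pbij: "bij_betw (P g) {0..<N0} {0..<N0}" for g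
  proof -
    have "bij_betw (h \<circ> (L g \<circ> inv_into S h)) {0..<N0} {0..<N0}"
      by (rule bij_betw_trans[OF bij_betw_trans[OF bij_betw_inv_into[OF h] Lbij] h])
    then show ?thesis by (rule bij_betw_cong[THEN iffD1, rotated]) (simp add: P_def)
  qed
  have Pperm: "P g permutes {0..<N0}" for g
    by (rule bij_imp_permutes[OF Pbij]) (simp add: P_def)
  have Ph: "s \<in> S \<Longrightarrow> P g (h s) = h (L g s)" for g s
    using h by (auto simp: P_def bij_betw_def inv_into_f_f)
  have Pinvh: "s \<in> S \<Longrightarrow> inv_into UNIV (P g) (h s) = h (inv_into UNIV (L g) s)" for g s
  proof -
    assume s: "s \<in> S"
    have s': "inv_into UNIV (L g) s \<in> S" using ltrS[OF s, of "(g,True)"] by (simp add: ltr_def)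
    have "P g (h (inv_into UNIV (L g) s)) = h s"
      using Ph[OF s'] by (simp add: invL L_def o_assoc permutes_inv_o(1)[OF q[of g]])
    then show ?thesis by (metis Pperm permutes_inv_eq)
  qed
  have ltrPh: "s \<in> S \<Longrightarrow> ltr P l (h s) = h (ltr L l s)" for l s
    by (simp add: ltr_def Ph Pinvh)
  have evPh: "s \<in> S \<Longrightarrow> evw P r (h s) = h (evw L r s)" for r s
    by (induction r arbitrary: s) (auto simp: ltrPh evS)
  have fpf: "evw P w i \<noteq> i" if i: "i < N0" for i
  proof -
    obtain s where s: "s \<in> S" "i = h s" using h i by (metis atLeastLessThan_iff bij_betw_def imageE zero_le)
    have sp: "s permutes T" using s S_def by simp
    obtain j where j: "s j = m0" using permutes_surj[OF sp] by (metis surjD)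
    have "evw L w s \<noteq> s"
    proof
      assume "evw L w s = s"
      then have "evw q w (s j) = s j" unfolding evL by (metis comp_apply)
      then show False using j m by simp
    qed
    moreover have "evw L w s \<in> S" using evS s by simp
    ultimately have "h (evw L w s) \<noteq> h s" using h s by (metis bij_betw_def inj_onD)
    then show ?thesis using evPh s by simp
  qed
  show ?thesis using N0 Pperm fpf by blast
qed

lemma fpf_rep:
  assumes "reduced w" "w \<noteq> []"
  shows "\<exists>N0 \<ge> 1. \<exists>P::'a \<Rightarrow> nat \<Rightarrow> nat. (\<forall>g. P g permutes {0..<N0}) \<and> (\<forall>i<N0. evw P w i \<noteq> i)"
  by (rule regular_rep[of "pp w" "{0..length w}" w "length w"])
     (auto simp: pp_props[OF assms(1)] path_nontriv[OF assms])



lemma fg_mult: "u \<otimes>\<^bsub>free_group B\<^esub> v = reduce (u @ v)"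
  by (simp add: free_group_def)

lemma fg_carrier: "w \<in> carrier (free_group B) \<longleftrightarrow> fst ` set w \<subseteq> B \<and> reduced w"
  by (simp add: free_group_def)

lemma fg_one: "\<one>\<^bsub>free_group B\<^esub> = []"
  by (simp add: free_group_def)

lemma reduced_drop: "reduced w \<Longrightarrow> reduced (drop j w)"
proof (induction j arbitrary: w)
  case 0 then show ?case by simp
next
  case (Suc j)
  then show ?case by (cases w) (auto dest: reduced_Cons)
qed

lemma drop_carrier: "w \<in> carrier (free_group B) \<Longrightarrow> drop j w \<in> carrier (free_group B)"
  unfolding fg_carrier using reduced_drop set_drop_subset by (metis image_mono order_trans)

lemma evw_hom:
  assumes P: "\<And>g. P g permutes \<Omega>" and fin: "finite \<Omega>"
  shows "sym_hom B \<Omega> (\<lambda>r. restrict (evw P r) \<Omega>)"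
proof -
  have ev: "evw P r permutes \<Omega>" for r by (rule evw_permutes[OF P])
  have bij: "bij (P g)" for g using P permutes_bij by blast
  have inB: "restrict (evw P r) \<Omega> \<in> Bij \<Omega>" for r
    unfolding Bij_def using permutes_imp_bij[OF ev[of r]]
    by (auto intro: bij_betw_cong[THEN iffD1, rotated])
  have "(\<lambda>r. restrict (evw P r) \<Omega>) \<in> hom (free_group B) (BijGroup \<Omega>)"
  proof (rule homI)
    fix x assume "x \<in> carrier (free_group B)"
    show "restrict (evw P x) \<Omega> \<in> carrier (BijGroup \<Omega>)" using inB by (simp add: BijGroup_def)
  next
    fix x y assume "x \<in> carrier (free_group B)" "y \<in> carrier (free_group B)"
    have "restrict (evw P (x \<otimes>\<^bsub>free_group B\<^esub> y)) \<Omega> = restrict (evw P x \<circ> evw P y) \<Omega>"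
      by (simp add: fg_mult evw_reduce[OF bij] evw_append)
    also have "\<dots> = compose \<Omega> (restrict (evw P x) \<Omega>) (restrict (evw P y) \<Omega>)"
      unfolding compose_def using permutes_in_image[OF ev[of y]] by (auto intro!: restrict_ext)
    also have "\<dots> = restrict (evw P x) \<Omega> \<otimes>\<^bsub>BijGroup \<Omega>\<^esub> restrict (evw P y) \<Omega>"
      using inB by (simp add: BijGroup_def)
    finally show "restrict (evw P (x \<otimes>\<^bsub>free_group B\<^esub> y)) \<Omega> =
        restrict (evw P x) \<Omega> \<otimes>\<^bsub>BijGroup \<Omega>\<^esub> restrict (evw P y) \<Omega>" .
  qed
  then show ?thesis using fin by (simp add: sym_hom_def)
qed

lemma BijGroup_one: "\<one>\<^bsub>BijGroup \<Omega>\<^esub> = (\<lambda>x\<in>\<Omega>. x)"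
  by (simp add: BijGroup_def)

lemma psi_facts:
  assumes h: "\<psi> \<in> hom (free_group B) (BijGroup \<Omega>)"
  shows psi_nil: "\<psi> [] = (\<lambda>x\<in>\<Omega>. x)"
    and psi_cons: "l # u \<in> carrier (free_group B) \<Longrightarrow> x \<in> \<Omega> \<Longrightarrow> \<psi> (l # u) x = \<psi> [l] (\<psi> u x)"
    and psi_inv: "g \<in> B \<Longrightarrow> z \<in> \<Omega> \<Longrightarrow> \<psi> [(g,True)] (\<psi> (gen g) z) = z"
proof -
  interpret BG: group "BijGroup \<Omega>" by (rule group_BijGroup)
  have nilc: "[] \<in> carrier (free_group B)" by (simp add: fg_carrier)
  have inc: "\<psi> r \<in> carrier (BijGroup \<Omega>)" if "r \<in> carrier (free_group B)" for r
    using h that by (auto simp: hom_def)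
  have "\<psi> [] = \<psi> ([] \<otimes>\<^bsub>free_group B\<^esub> [])" by (simp add: fg_mult reduce_def)
  also have "\<dots> = \<psi> [] \<otimes>\<^bsub>BijGroup \<Omega>\<^esub> \<psi> []" using hom_mult[OF h nilc nilc] .
  finally have "\<psi> [] = \<one>\<^bsub>BijGroup \<Omega>\<^esub>" using inc[OF nilc] by simp
  then show nil: "\<psi> [] = (\<lambda>x\<in>\<Omega>. x)" by (simp add: BijGroup_one)
  have mulx: "\<psi> (u \<otimes>\<^bsub>free_group B\<^esub> v) x = \<psi> u (\<psi> v x)"
    if "u \<in> carrier (free_group B)" "v \<in> carrier (free_group B)" "x \<in> \<Omega>" for u v x
  proof -
    have "\<psi> (u \<otimes>\<^bsub>free_group B\<^esub> v) = \<psi> u \<otimes>\<^bsub>BijGroup \<Omega>\<^esub> \<psi> v" using hom_mult[OF h that(1,2)] .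
    also have "\<dots> = compose \<Omega> (\<psi> u) (\<psi> v)" using inc that by (simp add: BijGroup_def)
    finally show ?thesis using that(3) by (simp add: compose_def)
  qed
  show "\<psi> (l # u) x = \<psi> [l] (\<psi> u x)" if "l # u \<in> carrier (free_group B)" "x \<in> \<Omega>"
  proof -
    have c1: "[l] \<in> carrier (free_group B)" "u \<in> carrier (free_group B)"
      using that(1) by (auto simp: fg_carrier dest: reduced_Cons)
    have "[l] \<otimes>\<^bsub>free_group B\<^esub> u = l # u"
      using that(1) by (simp add: fg_mult fg_carrier reduce_reduced)
    then show ?thesis using mulx[OF c1 that(2)] by simp
  qed
  show "\<psi> [(g,True)] (\<psi> (gen g) z) = z" if "g \<in> B" "z \<in> \<Omega>"
  proof -
    have c1: "[(g,True)] \<in> carrier (free_group B)" "gen g \<in> carrier (free_group B)"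
      using that by (auto simp: fg_carrier gen_def)
    have "[(g,True)] \<otimes>\<^bsub>free_group B\<^esub> gen g = []"
      by (simp add: fg_mult gen_def reduce_def)
    then show ?thesis using mulx[OF c1 that(2)] nil that(2) by simp
  qed
qed



lemma core_abs:
  fixes P :: "'a \<Rightarrow> nat \<Rightarrow> nat" and w :: "('a \<times> bool) list"
  assumes Pperm: "\<And>g. P g permutes {0..<N0}" and n: "N0 \<le> n"
    and fpf: "\<And>i. i < N0 \<Longrightarrow> evw P w i \<noteq> i"
    and wK: "w \<in> K" and wc: "w \<in> carrier (free_group B)" and wne: "w \<noteq> []"
    and eps: "real (length w) * \<epsilon> * real n \<le> real N0" and N0: "N0 \<ge> 1"
  shows "\<not> (\<exists>\<psi>. sym_hom B {0..<n} \<psi> \<and> is_solution B {0..<n} K \<psi> \<and>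
            eps_close B {0..<n} \<epsilon> \<psi> (\<lambda>r. restrict (evw P r) {0..<n}))"
proof
  define \<Omega> where "\<Omega> = {0..<n}"
  define \<phi> where "\<phi> = (\<lambda>r. restrict (evw P r) \<Omega>)"
  define k where "k = length w"
  assume "\<exists>\<psi>. sym_hom B {0..<n} \<psi> \<and> is_solution B {0..<n} K \<psi> \<and>
            eps_close B {0..<n} \<epsilon> \<psi> (\<lambda>r. restrict (evw P r) {0..<n})"
  then obtain \<psi> where hom: "\<psi> \<in> hom (free_group B) (BijGroup \<Omega>)"
    and sol: "K \<subseteq> kernel (free_group B) (BijGroup \<Omega>) \<psi>"
    and close: "\<And>g. g \<in> B \<Longrightarrow> hdist \<Omega> (\<psi> (gen g)) (\<phi> (gen g)) < \<epsilon>"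
    unfolding sym_hom_def is_solution_def eps_close_def \<Omega>_def \<phi>_def by blast
  have PO: "P g permutes \<Omega>" for g
    by (rule permutes_subset[OF Pperm]) (use n in \<open>auto simp: \<Omega>_def\<close>)
  have evO: "evw P r permutes \<Omega>" for r by (rule evw_permutes[OF PO])
  have npos: "n > 0" using n N0 by simp
  have cardO: "card \<Omega> = n" by (simp add: \<Omega>_def)
  have psiw: "\<psi> w x = x" if "x \<in> \<Omega>" for x
    using sol wK that by (auto simp: kernel_def BijGroup_one)
  define xs where "xs x j = evw P (drop j w) x" for x j
  define bad where "bad j x \<longleftrightarrow> \<psi> [w!j] (xs x (Suc j)) \<noteq> ltr P (w!j) (xs x (Suc j))" for j x
  have xsO: "x \<in> \<Omega> \<Longrightarrow> xs x j \<in> \<Omega>" for x j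
    unfolding xs_def using permutes_in_image[OF evO] by blast
  have claimA: "\<exists>j<k. bad j x" if x: "x < N0" for x
  proof (rule ccontr)
    assume nb: "\<not> (\<exists>j<k. bad j x)"
    have xO: "x \<in> \<Omega>" using x n by (simp add: \<Omega>_def)
    have "i \<le> k \<Longrightarrow> \<psi> (drop (k - i) w) x = xs x (k - i)" for i
    proof (induction i)
      case 0 then show ?case using psi_nil[OF hom] xO by (simp add: xs_def k_def)
    next
      case (Suc i)
      define j where "j = k - Suc i"
      have j: "j < k" using Suc.prems by (simp add: j_def)
      have dj: "drop j w = w!j # drop (Suc j) w" using j by (simp add: k_def Cons_nth_drop_Suc)
      have sj: "Suc j = k - i" using Suc.prems by (simp add: j_def)
      have "\<psi> (drop j w) x = \<psi> [w!j] (\<psi> (drop (Suc j) w) x)"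
        using psi_cons[OF hom, of "w!j" "drop (Suc j) w" x] dj drop_carrier[OF wc, of j] xO by simp
      also have "\<dots> = \<psi> [w!j] (xs x (Suc j))" using Suc sj by simp
      also have "\<dots> = ltr P (w!j) (xs x (Suc j))" using nb j by (auto simp: bad_def)
      also have "\<dots> = xs x j" using dj by (simp add: xs_def)
      finally show ?case by (simp add: j_def)
    qed
    from this[of k] have "\<psi> w x = evw P w x" by (simp add: xs_def)
    then show False using psiw[OF xO] fpf[OF x] by simp
  qed
  define Bad where "Bad g = {z \<in> \<Omega>. \<psi> (gen g) z \<noteq> \<phi> (gen g) z}" for g
  have cardBad: "real (card (Bad g)) < \<epsilon> * n" if "g \<in> B" for g
    using close[OF that] npos cardO by (simp add: hdist_def Bad_def divide_less_eq)
  define Xs where "Xs j = {x \<in> {0..<N0}. bad j x}" for j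
  have cardX: "real (card (Xs j)) < \<epsilon> * n" if j: "j < k" for j
  proof -
    obtain g b where wj: "w!j = (g, b)" by fastforce
    have "w!j \<in> set w" using j k_def by simp
    then have "fst (w!j) \<in> B" using wc by (auto simp: fg_carrier)
    then have gB: "g \<in> B" using wj by simp
    define bt where "bt x = (if b then inv_into UNIV (P g) else id) (xs x (Suc j))" for x
    have inj: "inj bt"
    proof -
      have i1: "inj (evw P (drop (Suc j) w))" by (rule permutes_inj[OF evO])
      have i2: "inj (if b then inv_into UNIV (P g) else id)"
        using permutes_inj[OF permutes_inv[OF PO]] by simp
      have "bt = (if b then inv_into UNIV (P g) else id) \<circ> evw P (drop (Suc j) w)"
        by (simp add: bt_def xs_def fun_eq_iff)
      then show ?thesis using inj_compose[OF i2 i1] by simp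
    qed
    have sub: "bt ` Xs j \<subseteq> Bad g"
    proof
      fix z assume "z \<in> bt ` Xs j"
      then obtain x where x: "x < N0" "bad j x" "z = bt x" by (auto simp: Xs_def)
      have xO: "x \<in> \<Omega>" using x n by (simp add: \<Omega>_def)
      let ?y = "xs x (Suc j)"
      have yO: "?y \<in> \<Omega>" using xsO[OF xO] .
      have phig: "\<phi> (gen g) v = P g v" if "v \<in> \<Omega>" for v
        using that by (simp add: \<phi>_def gen_def ltr_def)
      show "z \<in> Bad g"
      proof (cases b)
        case False
        then have "\<psi> (gen g) ?y \<noteq> P g ?y" using x(2) wj by (simp add: bad_def gen_def ltr_def)
        then show ?thesis using yO phig x(3) False by (simp add: Bad_def bt_def)
      next
        case True
        let ?z = "inv_into UNIV (P g) ?y"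
        have zO: "?z \<in> \<Omega>" using yO permutes_in_image[OF permutes_inv[OF PO]] by blast
        have "\<psi> (gen g) ?z \<noteq> P g ?z"
        proof
          assume e: "\<psi> (gen g) ?z = P g ?z"
          have "P g ?z = ?y" using permutes_inverses(1)[OF PO] .
          then have "\<psi> [(g,True)] ?y = ?z" using psi_inv[OF hom gB zO] e by simp
          then show False using x(2) wj True by (simp add: bad_def ltr_def)
        qed
        then show ?thesis using zO phig x(3) True by (simp add: Bad_def bt_def)
      qed
    qed
    have "card (Xs j) = card (bt ` Xs j)" using inj by (simp add: card_image inj_on_subset)
    also have "\<dots> \<le> card (Bad g)"
      by (rule card_mono[OF _ sub]) (simp add: Bad_def \<Omega>_def)
    finally show ?thesis using cardBad[OF gB] by linarith
  qed
  have cover: "{0..<N0} \<subseteq> (\<Union>j\<in>{..<k}. Xs j)" using claimA by (fastforce simp: Xs_def)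
  have "card {0..<N0} \<le> card (\<Union>j\<in>{..<k}. Xs j)"
    by (rule card_mono[OF _ cover]) (simp add: Xs_def)
  also have "\<dots> \<le> (\<Sum>j\<in>{..<k}. card (Xs j))" by (rule card_UN_le) simp
  finally have "real N0 \<le> (\<Sum>j\<in>{..<k}. real (card (Xs j)))"
    by (metis card_atLeastLessThan diff_zero of_nat_le_iff of_nat_sum)
  also have "\<dots> < (\<Sum>j\<in>{..<k}. \<epsilon> * n)"
    by (rule sum_strict_mono) (use cardX wne k_def in auto)
  also have "\<dots> = real k * \<epsilon> * n" by simp
  finally show False using eps k_def by simp
qed



lemma core:
  fixes w :: "('a \<times> bool) list"
  assumes wK: "w \<in> K" and wc: "w \<in> carrier (free_group B)" and wne: "w \<noteq> []"
    and a: "real (length w) * \<epsilon> \<le> 1/2" and epos: "\<epsilon> > 0"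
    and dl: "\<delta> > 2 * real (length w) * \<epsilon>"
  shows "\<exists>\<Omega> \<phi>. sym_hom B \<Omega> \<phi> \<and> \<phi> [] = \<one>\<^bsub>BijGroup \<Omega>\<^esub> \<and>
            (\<forall>r. hdist \<Omega> (\<phi> r) \<one>\<^bsub>BijGroup \<Omega>\<^esub> < \<delta>) \<and>
            \<not> (\<exists>\<psi>. sym_hom B \<Omega> \<psi> \<and> is_solution B \<Omega> K \<psi> \<and> eps_close B \<Omega> \<epsilon> \<psi> \<phi>)"
proof -
  have red: "reduced w" using wc by (simp add: fg_carrier)
  obtain N0 and P :: "'a \<Rightarrow> nat \<Rightarrow> nat" where N0: "N0 \<ge> 1" and Pperm: "\<And>g. P g permutes {0..<N0}"
    and fpf: "\<And>i. i < N0 \<Longrightarrow> evw P w i \<noteq> i"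
    using fpf_rep[OF red wne] by blast
  define A where "A = real (length w) * \<epsilon>"
  have Apos: "A > 0" using wne epos by (simp add: A_def)
  define n where "n = nat \<lfloor>real N0 / A\<rfloor>"
  have A1: "A \<le> 1/2" using a by (simp add: A_def)
  have N0r: "real N0 \<ge> 1" using N0 by simp
  have N0A: "real N0 / A \<ge> real N0"
    using divide_left_mono[of A 1 "real N0"] Apos A1 by simp
  have fl: "real_of_int \<lfloor>real N0 / A\<rfloor> \<le> real N0 / A" "real N0 / A < real_of_int \<lfloor>real N0 / A\<rfloor> + 1"
    by (rule of_int_floor_le, rule real_of_int_floor_add_one_gt)
  have "int N0 \<le> \<lfloor>real N0 / A\<rfloor>" using N0A by (simp add: le_floor_iff)
  then have "real_of_int \<lfloor>real N0 / A\<rfloor> \<ge> real N0" by linarith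
  then have nr: "real n = real_of_int \<lfloor>real N0 / A\<rfloor>" and nN0: "real n \<ge> real N0"
    by (auto simp: n_def)
  have n: "N0 \<le> n" using nN0 by simp
  have npos: "n > 0" using n N0 by simp
  have "A * real n \<le> A * (real N0 / A)" using fl(1) nr Apos by (intro mult_left_mono) auto
  also have "\<dots> = real N0" using Apos by simp
  finally have e1: "A * real n \<le> real N0" .
  have "real N0 / (2 * A) \<ge> (2 * A) / (2 * A)"
    by (rule divide_right_mono) (use A1 N0r Apos in auto)
  then have h1: "real N0 / (2 * A) \<ge> 1" using Apos by simp
  have "real N0 / A = 2 * (real N0 / (2 * A))" using Apos by simp
  then have "real N0 / A - 1 \<ge> real N0 / (2 * A)" using h1 by linarith
  moreover have "real n > real N0 / A - 1" using fl(2) nr by simp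
  ultimately have "real N0 / (2 * A) < real n" by linarith
  then have "real N0 < real n * (2 * A)" using Apos by (simp add: pos_divide_less_eq)
  then have frac: "real N0 / real n < 2 * A" using npos by (simp add: pos_divide_less_eq mult.commute)
  have e1': "real (length w) * \<epsilon> * real n \<le> real N0" using e1 by (simp add: A_def)
  define \<Omega> where "\<Omega> = {0..<n}"
  define \<phi> where "\<phi> = (\<lambda>r. restrict (evw P r) \<Omega>)"
  have PO: "P g permutes \<Omega>" for g
    by (rule permutes_subset[OF Pperm]) (use n in \<open>auto simp: \<Omega>_def\<close>)
  have hom: "sym_hom B \<Omega> \<phi>" unfolding \<phi>_def by (rule evw_hom[OF PO]) (simp add: \<Omega>_def)
  have one: "\<phi> [] = \<one>\<^bsub>BijGroup \<Omega>\<^esub>" by (simp add: \<phi>_def BijGroup_one id_def)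
  have hd: "hdist \<Omega> (\<phi> r) \<one>\<^bsub>BijGroup \<Omega>\<^esub> < \<delta>" for r
  proof -
    have "{\<omega> \<in> \<Omega>. \<phi> r \<omega> \<noteq> \<one>\<^bsub>BijGroup \<Omega>\<^esub> \<omega>} \<subseteq> {0..<N0}"
    proof
      fix \<omega> assume "\<omega> \<in> {\<omega> \<in> \<Omega>. \<phi> r \<omega> \<noteq> \<one>\<^bsub>BijGroup \<Omega>\<^esub> \<omega>}"
      then have "\<omega> \<in> \<Omega>" "evw P r \<omega> \<noteq> \<omega>" by (auto simp: \<phi>_def BijGroup_one)
      moreover have evP: "evw P r permutes {0..<N0}" by (rule evw_permutes[OF Pperm])
      ultimately show "\<omega> \<in> {0..<N0}" using permutes_not_in[OF evP] by blast
    qed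
    then have "card {\<omega> \<in> \<Omega>. \<phi> r \<omega> \<noteq> \<one>\<^bsub>BijGroup \<Omega>\<^esub> \<omega>} \<le> N0"
      by (metis card_atLeastLessThan card_mono diff_zero finite_atLeastLessThan)
    then have "hdist \<Omega> (\<phi> r) \<one>\<^bsub>BijGroup \<Omega>\<^esub> \<le> real N0 / real n"
      unfolding hdist_def using npos by (simp add: \<Omega>_def divide_right_mono)
    then show ?thesis using frac dl A_def by linarith
  qed
  have nc: "\<not> (\<exists>\<psi>. sym_hom B \<Omega> \<psi> \<and> is_solution B \<Omega> K \<psi> \<and> eps_close B \<Omega> \<epsilon> \<psi> \<phi>)"
    unfolding \<Omega>_def \<phi>_def
    by (rule core_abs[OF Pperm n fpf wK wc wne e1' N0])
  show ?thesis using hom one hd nc by blast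
qed

lemma not_stab:
  assumes "w \<in> K" "w \<in> carrier (free_group B)" "w \<noteq> []"
    "real (length w) * \<epsilon> \<le> 1/2" "\<epsilon> > 0" "\<delta> > 2 * real (length w) * \<epsilon>"
  shows "\<not> stab_property B K \<epsilon> \<delta> E"
proof
  assume st: "stab_property B K \<epsilon> \<delta> E"
  obtain \<Omega> \<phi> where "sym_hom B \<Omega> \<phi>" "\<forall>r. hdist \<Omega> (\<phi> r) \<one>\<^bsub>BijGroup \<Omega>\<^esub> < \<delta>"
    "\<not> (\<exists>\<psi>. sym_hom B \<Omega> \<psi> \<and> is_solution B \<Omega> K \<psi> \<and> eps_close B \<Omega> \<epsilon> \<psi> \<phi>)"
    using core[OF assms] by blast
  then show False using st unfolding stab_property_def almost_solution_def by blast
qed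

lemma not_stab_triv:
  assumes "w \<in> K" "w \<in> carrier (free_group B)" "w \<noteq> []"
    "real (length w) * \<epsilon> \<le> 1/4" "\<epsilon> > 0" "\<delta> > 0" "E \<subseteq> {[]}"
  shows "\<not> stab_property B K \<epsilon> \<delta> E"
proof
  assume st: "stab_property B K \<epsilon> \<delta> E"
  have "1 > 2 * real (length w) * \<epsilon>" using assms(4) by simp
  then obtain \<Omega> \<phi> where "sym_hom B \<Omega> \<phi>" "\<phi> [] = \<one>\<^bsub>BijGroup \<Omega>\<^esub>"
    "\<not> (\<exists>\<psi>. sym_hom B \<Omega> \<psi> \<and> is_solution B \<Omega> K \<psi> \<and> eps_close B \<Omega> \<epsilon> \<psi> \<phi>)"
    using core[OF assms(1,2,3) _ assms(5), of 1] assms(4) by fastforce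
  moreover have "almost_solution B \<Omega> \<delta> E \<phi>"
    using assms(6,7) \<open>\<phi> [] = _\<close> by (auto simp: almost_solution_def hdist_def)
  ultimately show False using st unfolding stab_property_def by blast
qed



lemma word_norm_ge:
  assumes "finite E" "w \<in> E"
  shows "real (length w) \<le> word_norm E"
  unfolding word_norm_def by (rule member_le_sum) (use assms in auto)

theorem proposition2p3:
  fixes B :: "'a set" and G :: "('g, 'm) monoid_scheme" and \<pi> :: "('a \<times> bool) list \<Rightarrow> 'g"
  assumes "finite B"
    and "group G"
    and "\<pi> \<in> hom (free_group B) G"
    and "\<pi> ` carrier (free_group B) = carrier G"
    and "stable B (kernel (free_group B) G \<pi>)"
    and "kernel (free_group B) G \<pi> \<noteq> {\<one>\<^bsub>free_group B\<^esub>}"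
  shows "\<exists>C1 C2. C1 > 0 \<and> C2 > 0 \<and> (\<forall>x::real. x \<ge> C1 \<longrightarrow>
           (\<forall>\<delta>::real. \<delta> > 0 \<and>
               (\<exists>E. finite E \<and> E \<subseteq> kernel (free_group B) G \<pi> \<and>
                    stab_property B (kernel (free_group B) G \<pi>) (1 / x) \<delta> E)
               \<longrightarrow> \<delta> \<le> C2 / x) \<and>
           stability_function B (kernel (free_group B) G \<pi>) x \<ge> x / 4)"
proof -
  define K where "K = kernel (free_group B) G \<pi>"
  interpret G: group G by (rule assms(2))
  have nilc: "[] \<in> carrier (free_group B)" by (simp add: fg_carrier)
  have pc: "\<pi> [] \<in> carrier G" using assms(3) nilc by (auto simp: hom_def)
  have "\<pi> [] = \<pi> ([] \<otimes>\<^bsub>free_group B\<^esub> [])" by (simp add: fg_mult reduce_def)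
  also have "\<dots> = \<pi> [] \<otimes>\<^bsub>G\<^esub> \<pi> []" using hom_mult[OF assms(3) nilc nilc] .
  finally have "\<pi> [] = \<one>\<^bsub>G\<^esub>" using pc by simp
  then have nilK: "[] \<in> K" using nilc by (simp add: K_def kernel_def)
  obtain w0 where w0K: "w0 \<in> K" and w0ne: "w0 \<noteq> []"
    using assms(6) nilK unfolding K_def[symmetric] fg_one by blast
  have KC: "K \<subseteq> carrier (free_group B)" by (auto simp: K_def kernel_def)
  have w0c: "w0 \<in> carrier (free_group B)" using w0K KC by blast
  define k0 where "k0 = real (length w0)"
  have k0: "k0 \<ge> 1" using w0ne by (simp add: k0_def Suc_le_eq)
  define C1 where "C1 = 4 * k0"
  define C2 where "C2 = 2 * k0"
  have main: "(\<forall>\<delta>::real. \<delta> > 0 \<and>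
               (\<exists>E. finite E \<and> E \<subseteq> K \<and> stab_property B K (1 / x) \<delta> E)
               \<longrightarrow> \<delta> \<le> C2 / x) \<and> stability_function B K x \<ge> x / 4" if x: "x \<ge> C1" for x
  proof -
    have xpos: "x > 0" using x k0 by (simp add: C1_def)
    have epos: "1 / x > 0" using xpos by simp
    have k0e: "real (length w0) * (1 / x) \<le> 1/4"
      using x xpos by (simp add: C1_def k0_def field_simps)
    have partI: "\<delta> \<le> C2 / x" if "\<delta> > 0" "stab_property B K (1 / x) \<delta> E" for \<delta> E
    proof (rule ccontr)
      assume "\<not> \<delta> \<le> C2 / x"
      then have "\<delta> > 2 * real (length w0) * (1 / x)" by (simp add: C2_def k0_def)
      moreover have k0h: "real (length w0) * (1 / x) \<le> 1/2" using k0e by linarith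
      ultimately show False using not_stab[OF w0K w0c w0ne k0h epos, of \<delta> E] that(2) by simp
    qed
    have partII: "x / 4 \<le> word_norm E / \<delta>" if vp: "valid_pair B K (1 / x) \<delta> E" for \<delta> E
    proof -
      have d: "0 < \<delta>" "\<delta> \<le> 1" and fE: "finite E" and EK: "E \<subseteq> K"
        and st: "stab_property B K (1 / x) \<delta> E"
        using vp by (auto simp: valid_pair_def)
      show ?thesis
      proof (cases "E \<subseteq> {[]}")
        case True
        then show ?thesis using not_stab_triv[OF w0K w0c w0ne k0e epos d(1) True] st by simp
      next
        case False
        then obtain w where wE: "w \<in> E" and wne: "w \<noteq> []" by blast
        have wK: "w \<in> K" and wc: "w \<in> carrier (free_group B)" using wE EK KC by auto
        have wn: "real (length w) \<le> word_norm E" by (rule word_norm_ge[OF fE wE])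
        have lw: "real (length w) \<ge> 1" using wne by (simp add: Suc_le_eq)
        show ?thesis
        proof (cases "real (length w) * (1 / x) \<le> 1/2")
          case True
          have "\<delta> \<le> 2 * real (length w) * (1 / x)"
          proof (rule ccontr)
            assume "\<not> ?thesis"
            then show False using not_stab[OF wK wc wne True epos, of \<delta> E] st by simp
          qed
          moreover have "2 * real (length w) * (1 / x) \<le> 2 * word_norm E / x"
            using divide_right_mono[of "2 * real (length w)" "2 * word_norm E" x] wn xpos by simp
          ultimately have "\<delta> \<le> 2 * word_norm E / x" by linarith
          then have "\<delta> * x \<le> 2 * word_norm E" using xpos by (simp add: le_divide_eq)
          then have "x / 2 \<le> word_norm E / \<delta>" using d(1) by (simp add: field_simps)
          then show ?thesis using xpos by linarith
        next
          case False
          then have "real (length w) > x / 2" using xpos by (simp add: field_simps)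
          then have "word_norm E > x / 2" using wn by linarith
          moreover have "word_norm E / \<delta> \<ge> word_norm E" using d
            using divide_left_mono[of \<delta> 1 "word_norm E"] wn lw by simp
          ultimately show ?thesis using xpos by linarith
        qed
      qed
    qed
    have ne: "{word_norm E / \<delta> | \<delta> E. valid_pair B K (1 / x) \<delta> E} \<noteq> {}"
      using assms(5) epos unfolding K_def[symmetric] stable_def by blast
    have "x / 4 \<le> stability_function B K x"
      unfolding stability_function_def
      by (rule cInf_greatest[OF ne]) (use partII in blast)
    then show ?thesis using partI by blast
  qed
  have "C1 > 0" "C2 > 0" using k0 by (auto simp: C1_def C2_def)
  then show ?thesis using main unfolding K_def by blast
qed


end
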